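(* Let $b\ge2$ be an integer and let $w$ be a fixed block of $b$-ary digits of length $p\ge1$. For every integer $k\ge0$, $S_w(k)<\infty$, where $S_w(k)=\sum_m 1/m$ and $m$ ranges over the positive integers whose minimal base-$b$ representation (no leading zeros) contains exactly $k$ possibly overlapping occurrences of $w$. *)

theory Defs
  imports Complex_Main
begin

function digits_rev :: "nat \<Rightarrow> nat \<Rightarrow> nat list" where
  "digits_rev b m = (if m = 0 \<or> b < 2 then [] else (m mod b) # digits_rev b (m div b))"
  by pat_completeness auto
termination by (relation "measure snd") auto

definition base_digits :: "nat \<Rightarrow> nat \<Rightarrow> nat list" where
  "base_digits b m = rev (digits_rev b m)"

definition occurrences :: "nat list \<Rightarrow> nat list \<Rightarrow> nat" where
  "occurrences w ds = card {i. i + length w \<le> length ds \<and> take (length w) (drop i ds) = w}"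

end

theory Submission
  imports Defs
begin

lemma bd_step:
  assumes "q > 0" "d < b" "b \<ge> 2"
  shows "base_digits b (q*b+d) = base_digits b q @ [d]"
proof -
  have "digits_rev b (q*b+d) = d # digits_rev b q"
    using assms by (subst digits_rev.simps) auto
  thus ?thesis by (simp add: base_digits_def)
qed

lemma bd_step2:
  assumes "x div b > 0" "b \<ge> 2"
  shows "base_digits b x = base_digits b (x div b) @ [x mod b]"
  using bd_step[of "x div b" "x mod b" b] assms by (simp add: mult.commute)

lemma foldl_shift:
  "foldl (\<lambda>a d. a*b+d) (q::nat) w = q * b ^ length w + foldl (\<lambda>a d. a*b+d) 0 w"
proof (induction w arbitrary: q)
  case Nil then show ?case by simp
next
  case (Cons d ws)
  have "foldl (\<lambda>a d. a*b+d) q (d#ws) = foldl (\<lambda>a d. a*b+d) (q*b+d) ws" by simp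
  also have "\<dots> = (q*b+d) * b ^ length ws + foldl (\<lambda>a d. a*b+d) 0 ws" by (rule Cons.IH)
  also have "foldl (\<lambda>a d. a*b+d) 0 (d#ws) = d * b ^ length ws + foldl (\<lambda>a d. a*b+d) 0 ws"
    using Cons.IH[of d] by simp
  ultimately show ?case by (simp add: algebra_simps)
qed

lemma foldl_less:
  assumes "\<forall>d\<in>set w. d < (b::nat)"
  shows "foldl (\<lambda>a d. a*b+d) a w < (a+1) * b ^ length w"
  using assms
proof (induction w arbitrary: a)
  case Nil then show ?case by simp
next
  case (Cons d ws)
  have "foldl (\<lambda>a d. a*b+d) a (d#ws) < (a*b+d+1) * b ^ length ws"
    using Cons by simp
  also have "\<dots> \<le> (a+1) * b * b ^ length ws"
    using Cons.prems by (intro mult_right_mono) (auto simp: algebra_simps)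
  finally show ?case by (simp add: algebra_simps)
qed

lemma bd_foldl:
  assumes "q > 0" "\<forall>d\<in>set w. d < b" "b \<ge> 2"
  shows "base_digits b (foldl (\<lambda>a d. a*b+d) q w) = base_digits b q @ w"
  using assms
proof (induction w arbitrary: q)
  case Nil then show ?case by simp
next
  case (Cons d ws)
  have "base_digits b (foldl (\<lambda>a d. a*b+d) q (d#ws)) = base_digits b (q*b+d) @ ws"
    using Cons by simp
  also have "\<dots> = base_digits b q @ (d # ws)"
    using Cons.prems bd_step[of q d b] by simp
  finally show ?case .
qed

lemma occ_fin: "finite {i. i + length w \<le> length ds \<and> take (length w) (drop i ds) = w}"
  by (rule finite_subset[of _ "{..length ds}"]) auto

lemma occ_mono: "occurrences w xs \<le> occurrences w (xs @ ys)"
  unfolding occurrences_def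
proof (rule card_mono[OF occ_fin])
  show "{i. i + length w \<le> length xs \<and> take (length w) (drop i xs) = w}
     \<subseteq> {i. i + length w \<le> length (xs @ ys) \<and> take (length w) (drop i (xs @ ys)) = w}"
    by auto
qed

lemma occ_app_w:
  assumes "length w \<ge> 1"
  shows "occurrences w xs + 1 \<le> occurrences w (xs @ w)"
proof -
  let ?S = "{i. i + length w \<le> length xs \<and> take (length w) (drop i xs) = w}"
  let ?T = "{i. i + length w \<le> length (xs@w) \<and> take (length w) (drop i (xs@w)) = w}"
  have sub: "insert (length xs) ?S \<subseteq> ?T" by auto
  have nin: "length xs \<notin> ?S" using assms by auto
  have "card (insert (length xs) ?S) = card ?S + 1" using card_insert_disjoint[OF occ_fin[of w xs] nin] by simp
  moreover have "card (insert (length xs) ?S) \<le> card ?T" by (rule card_mono[OF occ_fin sub])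
  ultimately show ?thesis unfolding occurrences_def by simp
qed

lemma occ_div:
  assumes "b \<ge> 2" "x div b ^ j > 0"
  shows "occurrences w (base_digits b (x div b ^ j)) \<le> occurrences w (base_digits b x)"
  using assms(2)
proof (induction j)
  case 0 then show ?case by simp
next
  case (Suc j)
  let ?y = "x div b ^ j"
  have e: "x div b ^ Suc j = ?y div b" by (simp add: div_mult2_eq[symmetric] mult.commute)
  have "?y div b > 0" using Suc.prems e by simp
  hence "?y > 0" by (metis div_0 gr0I)
  have "base_digits b ?y = base_digits b (?y div b) @ [?y mod b]"
    using bd_step2 assms(1) \<open>?y div b > 0\<close> by blast
  hence "occurrences w (base_digits b (?y div b)) \<le> occurrences w (base_digits b ?y)"
    by (metis occ_mono)
  also have "\<dots> \<le> occurrences w (base_digits b x)" using Suc.IH \<open>?y > 0\<close> by simp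
  finally show ?case using e by simp
qed

lemma reindex_divmod:
  fixes h :: "nat \<Rightarrow> nat \<Rightarrow> real"
  assumes "B > 0"
  shows "(\<Sum>m<B*N. h (m div B) (m mod B)) = (\<Sum>q<N. \<Sum>s<B. h q s)"
proof -
  let ?g = "\<lambda>m. h (m div B) (m mod B)"
  have "(\<Sum>m<B*N. ?g m) = (\<Sum>q<N. sum ?g {q*B..<q*B+B})"
    using sum.nat_group[of ?g B N] by (simp add: mult.commute)
  also have "\<dots> = (\<Sum>q<N. \<Sum>s<B. h q s)"
  proof (rule sum.cong[OF refl])
    fix q assume "q \<in> {..<N}"
    have "sum ?g {q*B..<q*B+B} = sum ?g {0+q*B..<B+q*B}" by (simp add: add.commute)
    also have "\<dots> = (\<Sum>i\<in>{0..<B}. ?g (i + q*B))" by (rule sum.shift_bounds_nat_ivl)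
    also have "\<dots> = (\<Sum>i\<in>{0..<B}. h q i)"
      using assms by (intro sum.cong) auto
    finally show "sum ?g {q*B..<q*B+B} = (\<Sum>s<B. h q s)" by (simp add: atLeast0LessThan)
  qed
  finally show ?thesis .
qed

lemma rec_bound:
  fixes F G :: "nat \<Rightarrow> real" and B v :: nat and C :: real
  assumes B2: "B \<ge> 2" and vB: "v < B" and Fnn: "\<forall>m. 0 \<le> F m" and Gnn: "\<forall>m. 0 \<le> G m"
    and F0: "F 0 = 0" and G0: "G 0 = 0"
    and hF: "\<forall>m. F m \<le> (if m div B = 0 then 1 else 0) + (if m mod B = v then G (m div B) else F (m div B)) / B"
    and hG: "\<forall>N. (\<Sum>q<N. G q) \<le> C"
  shows "(\<Sum>m<N. F m) \<le> real B^2 + C"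
proof -
  define H where "H q s = (if q = 0 then 1 else 0) + (if s = v then G q else F q) / real B" for q s
  have "(\<Sum>m<N. F m) \<le> (\<Sum>m<B*N. F m)"
    using B2 Fnn by (intro sum_mono2) auto
  also have "\<dots> \<le> (\<Sum>m<B*N. H (m div B) (m mod B))"
    using hF unfolding H_def by (intro sum_mono) auto
  also have "\<dots> = (\<Sum>q<N. \<Sum>s<B. H q s)" using B2 by (intro reindex_divmod) auto
  also have "\<dots> = (\<Sum>q<N. (if q = 0 then real B else 0) + ((real B - 1) * F q + G q) / real B)"
  proof (rule sum.cong[OF refl])
    fix q
    have "(\<Sum>s<B. H q s) = (\<Sum>s<B. ((if q = 0 then 1 else 0) + F q / real B) + (if s = v then (G q - F q) / real B else 0))"
      unfolding H_def by (intro sum.cong) (auto simp: diff_divide_distrib)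
    also have "\<dots> = real B * ((if q = 0 then 1 else 0) + F q / real B) + (G q - F q) / real B"
      using vB by (simp add: sum.distrib)
    also have "\<dots> = (if q = 0 then real B else 0) + ((real B - 1) * F q + G q) / real B"
      using B2 by (simp add: field_simps)
    finally show "(\<Sum>s<B. H q s) = \<dots>" .
  qed
  also have "\<dots> = (\<Sum>q<N. (if q = 0 then real B else 0)) + ((real B - 1) * (\<Sum>q<N. F q) + (\<Sum>q<N. G q)) / real B"
    by (simp add: sum.distrib sum_divide_distrib[symmetric] sum_distrib_left)
  also have "\<dots> \<le> real B + ((real B - 1) * (\<Sum>q<N. F q) + C) / real B"
  proof -
    have "(\<Sum>q<N. (if q = 0 then real B else 0)) \<le> real B" by (simp add: sum.delta)
    moreover have "((real B - 1) * (\<Sum>q<N. F q) + (\<Sum>q<N. G q)) / real B \<le> ((real B - 1) * (\<Sum>q<N. F q) + C) / real B"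
      using hG B2 by (intro divide_right_mono) auto
    ultimately show ?thesis by linarith
  qed
  finally have "(\<Sum>m<N. F m) \<le> real B + ((real B - 1) * (\<Sum>q<N. F q) + C) / real B" .
  hence "real B * (\<Sum>m<N. F m) \<le> real B * real B + ((real B - 1) * (\<Sum>q<N. F q) + C)"
    using B2 by (simp add: field_simps)
  thus ?thesis by (simp add: power2_eq_square algebra_simps)
qed

definition FK :: "nat \<Rightarrow> nat list \<Rightarrow> nat \<Rightarrow> nat \<Rightarrow> real" where
  "FK b w K m = (if m > 0 \<and> occurrences w (base_digits b m) \<le> K then 1 / real m else 0)"

lemma FK_nn: "0 \<le> FK b w K m" by (simp add: FK_def)

lemma FK0: "FK b w K 0 = 0" by (simp add: FK_def)

lemma FK_bound:
  assumes b2: "b \<ge> 2" and w1: "length w \<ge> 1" and wd: "\<forall>d\<in>set w. d < b"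
  defines "B \<equiv> b ^ length w" and "v \<equiv> foldl (\<lambda>a d. a*b+d) 0 w"
  shows "FK b w K m \<le> (if m div B = 0 then 1 else 0) +
     (if m mod B = v then (if K = 0 then 0 else FK b w (K-1) (m div B)) else FK b w K (m div B)) / real B"
proof (cases "FK b w K m = 0")
  case True
  thus ?thesis by (simp add: FK_nn)
next
  case False
  hence m0: "m > 0" and occ: "occurrences w (base_digits b m) \<le> K" and Fm: "FK b w K m = 1 / real m"
    by (auto simp: FK_def split: if_splits)
  have Bpos: "B > 0" using b2 by (simp add: B_def)
  show ?thesis
  proof (cases "m div B = 0")
    case True
    have "FK b w K m \<le> 1" using Fm m0 by simp
    moreover have "0 \<le> (if m mod B = v then (if K = 0 then 0 else FK b w (K-1) (m div B)) else FK b w K (m div B)) / real B"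
      by (simp add: FK_nn)
    ultimately show ?thesis using True by simp
  next
    case False
    define q where "q = m div B"
    have q0: "q > 0" using False q_def by simp
    have oq: "occurrences w (base_digits b q) \<le> occurrences w (base_digits b m)"
      using occ_div[OF b2, of m "length w" w] q0 unfolding q_def B_def by simp
    have mq: "real B * real q \<le> real m"
    proof -
      have "B * q \<le> m" unfolding q_def by (metis div_times_less_eq_dividend mult.commute)
      thus ?thesis by (metis of_nat_mono of_nat_mult)
    qed
    have inv: "1 / real m \<le> (1 / real q) / real B"
    proof -
      have "1 / real m \<le> 1 / (real B * real q)"
        using mq q0 Bpos m0 by (intro divide_left_mono) auto
      thus ?thesis by (simp add: field_simps)
    qed
    show ?thesis
    proof (cases "m mod B = v")
      case True
      have "m = q * B + v" using True q_def by (metis div_mult_mod_eq)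
      also have "\<dots> = foldl (\<lambda>a d. a*b+d) q w" unfolding v_def B_def by (rule foldl_shift[symmetric])
      finally have "base_digits b m = base_digits b q @ w" using bd_foldl[OF q0 wd b2] by simp
      hence "occurrences w (base_digits b q) + 1 \<le> occurrences w (base_digits b m)"
        using occ_app_w[OF w1] by simp
      hence K1: "K \<ge> 1" and oq': "occurrences w (base_digits b q) \<le> K - 1" using occ by auto
      have "FK b w (K-1) q = 1 / real q" using q0 oq' by (simp add: FK_def)
      thus ?thesis using True K1 Fm inv q_def False by simp
    next
      case f2: False
      have "FK b w K q = 1 / real q" using q0 oq occ by (simp add: FK_def)
      thus ?thesis using f2 Fm inv q_def False by simp
    qed
  qed
qed

lemma FK_partial:
  assumes b2: "b \<ge> 2" and w1: "length w \<ge> 1" and wd: "\<forall>d\<in>set w. d < b"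
  shows "\<forall>N. (\<Sum>m<N. FK b w K m) \<le> real (K+1) * real (b ^ length w)^2"
proof (induction K)
  let ?B = "b ^ length w" and ?v = "foldl (\<lambda>a d. a*b+d) 0 w"
  have B2: "?B \<ge> 2"
  proof -
    have "b ^ 1 \<le> b ^ length w" using w1 b2 by (intro power_increasing) auto
    thus ?thesis using b2 by simp
  qed
  have vB: "?v < ?B" using foldl_less[OF wd, of 0] by simp
  {
    case 0
    show ?case
    proof
      fix N
      have "(\<Sum>m<N. FK b w 0 m) \<le> real ?B ^ 2 + 0"
      proof -
        have hb: "\<forall>m. FK b w 0 m \<le> (if m div ?B = 0 then 1 else 0) + (if m mod ?B = ?v then (\<lambda>_. 0) (m div ?B) else FK b w 0 (m div ?B)) / real ?B"
        proof
          fix m show "FK b w 0 m \<le> (if m div ?B = 0 then 1 else 0) + (if m mod ?B = ?v then (\<lambda>_. 0) (m div ?B) else FK b w 0 (m div ?B)) / real ?B"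
            using FK_bound[OF b2 w1 wd, of 0 m] by (simp only: simp_thms if_True)
        qed
        show ?thesis
          by (rule rec_bound[where G="\<lambda>_. 0" and v = ?v and F = "FK b w 0" and C = 0, OF B2 vB _ _ _ _ hb]) (simp_all add: FK_nn FK0)
      qed
      thus "(\<Sum>m<N. FK b w 0 m) \<le> real (0+1) * real ?B ^ 2" by simp
    qed
  next
    case (Suc K)
    show ?case
    proof
      fix N
      have "(\<Sum>m<N. FK b w (Suc K) m) \<le> real ?B ^ 2 + real (K+1) * real ?B ^ 2"
      proof -
        have hb: "\<forall>m. FK b w (Suc K) m \<le> (if m div ?B = 0 then 1 else 0) + (if m mod ?B = ?v then FK b w K (m div ?B) else FK b w (Suc K) (m div ?B)) / real ?B"
        proof
          fix m show "FK b w (Suc K) m \<le> (if m div ?B = 0 then 1 else 0) + (if m mod ?B = ?v then FK b w K (m div ?B) else FK b w (Suc K) (m div ?B)) / real ?B"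
            using FK_bound[OF b2 w1 wd, of "Suc K" m] by (simp only: nat.distinct if_False diff_Suc_1)
        qed
        show ?thesis
          by (rule rec_bound[where G="FK b w K" and v = ?v and F = "FK b w (Suc K)" and C = "real (K+1) * real ?B ^ 2", OF B2 vB _ _ _ _ hb]) (use Suc.IH in \<open>simp_all add: FK_nn FK0\<close>)
      qed
      thus "(\<Sum>m<N. FK b w (Suc K) m) \<le> real (Suc K+1) * real ?B ^ 2" by (simp add: algebra_simps)
    qed
  }
qed

theorem lemma2:
  fixes b :: nat and w :: "nat list" and k :: nat
  assumes "b \<ge> 2" and "length w \<ge> 1" and "\<forall>d\<in>set w. d < b"
  shows "summable (\<lambda>m::nat. if m > 0 \<and> occurrences w (base_digits b m) = k
                             then 1 / real m else 0)"
proof (rule summable_comparison_test[where g = "FK b w k"])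
  show "\<exists>N. \<forall>n\<ge>N. norm (if n > 0 \<and> occurrences w (base_digits b n) = k then 1 / real n else 0) \<le> FK b w k n"
    by (auto simp: FK_def)
  show "summable (FK b w k)"
    using FK_partial[OF assms, of k] by (intro summableI_nonneg_bounded[where x = "real (k+1) * real (b ^ length w)^2"]) (auto simp: FK_nn)
qed

end
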